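(* Let $M$ be a globally hyperbolic developable conformally flat spacetime of dimension $n\ge3$ with developing map $D:M\to\widetilde{Ein}_{1,n-1}$. Let $U$ be a causally convex open subset of $M$ and let $\Sigma$ be a Cauchy hypersurface of $U$ such that $D(\Sigma)$ is achronal in $\widetilde{Ein}_{1,n-1}$. If the restriction of $D$ to $\Sigma$ is injective, then the restriction of $D$ to $U$ is injective.
   Context: $\widetilde{Ein}_{1,n-1}$ denotes the universal cover of the Einstein universe, conformally identified with $\mathbb{S}^{n-1}\times\mathbb{R}$ with the conformal class of $d\sigma^2-dt^2$, time-oriented by $\partial_t$. A conformally flat spacetime $M$ is developable if it admits a developing map: a conformal, time-orientation preserving local diffeomorphism $D:M\to\widetilde{Ein}_{1,n-1}$. A subset $U$ of a spacetime is causally convex if every causal curve joining two points of $U$ is contained in $U$. *)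

theory Defs
  imports "HOL-Analysis.Analysis"
begin

text \<open>Universal cover of the Einstein universe: the unit sphere of the
  Euclidean space 'a (of dimension n) times the real line, with time coordinate
  the second component. The conformal class of dsigma^2 - dt^2 is encoded
  through its causal structure: spherical (round) distance versus time.\<close>

definition ein_set :: "('a::euclidean_space \<times> real) set" where
  "ein_set = {(x, t). norm x = 1}"

definition ein_top :: "('a::euclidean_space \<times> real) topology" where
  "ein_top = subtopology euclidean ein_set"

definition sdist :: "'a::euclidean_space \<Rightarrow> 'a \<Rightarrow> real" where
  "sdist x y = arccos (x \<bullet> y)"

definition local_homeo :: "'m topology \<Rightarrow> 'b topology \<Rightarrow> ('m \<Rightarrow> 'b) \<Rightarrow> bool" where
  "local_homeo X Y f \<longleftrightarrow>
     (\<forall>p \<in> topspace X. \<exists>V. openin X V \<and> p \<in> V \<and> openin Y (f ` V) \<and>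
        homeomorphic_map (subtopology X V) (subtopology Y (f ` V)) f)"

text \<open>A developable conformally flat spacetime, presented through its developing
  map: the conformal structure and time orientation of M are the pull-backs by D.\<close>
definition developed_spacetime :: "'m topology \<Rightarrow> ('m \<Rightarrow> 'a::euclidean_space \<times> real) \<Rightarrow> bool" where
  "developed_spacetime X D \<longleftrightarrow> topspace X \<noteq> {} \<and> Hausdorff_space X \<and> second_countable X \<and>
     connected_space X \<and> local_homeo X ein_top D"

definition param_interval :: "real set \<Rightarrow> bool" where
  "param_interval I \<longleftrightarrow> is_interval I \<and> (\<exists>a\<in>I. \<exists>b\<in>I. a < b)"

definition future_causal_curve ::
  "'m topology \<Rightarrow> ('m \<Rightarrow> 'a::euclidean_space \<times> real) \<Rightarrow> (real \<Rightarrow> 'm) \<Rightarrow> real set \<Rightarrow> bool" where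
  "future_causal_curve X D \<gamma> I \<longleftrightarrow> param_interval I \<and>
     continuous_map (subtopology euclideanreal I) X \<gamma> \<and>
     (\<forall>s1\<in>I. \<forall>s2\<in>I. s1 < s2 \<longrightarrow>
        snd (D (\<gamma> s1)) < snd (D (\<gamma> s2)) \<and>
        sdist (fst (D (\<gamma> s1))) (fst (D (\<gamma> s2))) \<le> snd (D (\<gamma> s2)) - snd (D (\<gamma> s1)))"

definition past_causal_curve ::
  "'m topology \<Rightarrow> ('m \<Rightarrow> 'a::euclidean_space \<times> real) \<Rightarrow> (real \<Rightarrow> 'm) \<Rightarrow> real set \<Rightarrow> bool" where
  "past_causal_curve X D \<gamma> I \<longleftrightarrow> param_interval I \<and>
     continuous_map (subtopology euclideanreal I) X \<gamma> \<and>
     (\<forall>s1\<in>I. \<forall>s2\<in>I. s1 < s2 \<longrightarrow>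
        snd (D (\<gamma> s2)) < snd (D (\<gamma> s1)) \<and>
        sdist (fst (D (\<gamma> s1))) (fst (D (\<gamma> s2))) \<le> snd (D (\<gamma> s1)) - snd (D (\<gamma> s2)))"

definition future_timelike_curve ::
  "'m topology \<Rightarrow> ('m \<Rightarrow> 'a::euclidean_space \<times> real) \<Rightarrow> (real \<Rightarrow> 'm) \<Rightarrow> real set \<Rightarrow> bool" where
  "future_timelike_curve X D \<gamma> I \<longleftrightarrow> param_interval I \<and>
     continuous_map (subtopology euclideanreal I) X \<gamma> \<and>
     (\<forall>s1\<in>I. \<forall>s2\<in>I. s1 < s2 \<longrightarrow>
        sdist (fst (D (\<gamma> s1))) (fst (D (\<gamma> s2))) < snd (D (\<gamma> s2)) - snd (D (\<gamma> s1)))"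

definition past_timelike_curve ::
  "'m topology \<Rightarrow> ('m \<Rightarrow> 'a::euclidean_space \<times> real) \<Rightarrow> (real \<Rightarrow> 'm) \<Rightarrow> real set \<Rightarrow> bool" where
  "past_timelike_curve X D \<gamma> I \<longleftrightarrow> param_interval I \<and>
     continuous_map (subtopology euclideanreal I) X \<gamma> \<and>
     (\<forall>s1\<in>I. \<forall>s2\<in>I. s1 < s2 \<longrightarrow>
        sdist (fst (D (\<gamma> s1))) (fst (D (\<gamma> s2))) < snd (D (\<gamma> s1)) - snd (D (\<gamma> s2)))"

definition causal_curve where
  "causal_curve X D \<gamma> I \<longleftrightarrow> future_causal_curve X D \<gamma> I \<or> past_causal_curve X D \<gamma> I"

definition timelike_curve where
  "timelike_curve X D \<gamma> I \<longleftrightarrow> future_timelike_curve X D \<gamma> I \<or> past_timelike_curve X D \<gamma> I"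

definition upper_end :: "real set \<Rightarrow> real filter" where
  "upper_end I = (if bdd_above I then at_left (Sup I) else at_top)"

definition lower_end :: "real set \<Rightarrow> real filter" where
  "lower_end I = (if bdd_below I then at_right (Inf I) else at_bot)"

definition inextendible :: "'m topology \<Rightarrow> (real \<Rightarrow> 'm) \<Rightarrow> real set \<Rightarrow> bool" where
  "inextendible X \<gamma> I \<longleftrightarrow>
     \<not> (\<exists>p. limitin X \<gamma> p (upper_end I)) \<and> \<not> (\<exists>p. limitin X \<gamma> p (lower_end I))"

definition cauchy_hypersurface ::
  "'m topology \<Rightarrow> ('m \<Rightarrow> 'a::euclidean_space \<times> real) \<Rightarrow> 'm set \<Rightarrow> bool" where
  "cauchy_hypersurface X D S \<longleftrightarrow> S \<subseteq> topspace X \<and>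
     (\<forall>\<gamma> I. timelike_curve X D \<gamma> I \<and> inextendible X \<gamma> I \<longrightarrow> (\<exists>!s. s \<in> I \<and> \<gamma> s \<in> S))"

definition causal_le where
  "causal_le X D p q \<longleftrightarrow> p = q \<or>
     (\<exists>\<gamma> a b. a < b \<and> future_causal_curve X D \<gamma> {a..b} \<and> \<gamma> a = p \<and> \<gamma> b = q)"

definition chrono_less where
  "chrono_less X D p q \<longleftrightarrow>
     (\<exists>\<gamma> a b. a < b \<and> future_timelike_curve X D \<gamma> {a..b} \<and> \<gamma> a = p \<and> \<gamma> b = q)"

definition globally_hyperbolic ::
  "'m topology \<Rightarrow> ('m \<Rightarrow> 'a::euclidean_space \<times> real) \<Rightarrow> bool" where
  "globally_hyperbolic X D \<longleftrightarrow>
     \<not> (\<exists>\<gamma> a b. a < b \<and> future_causal_curve X D \<gamma> {a..b} \<and> \<gamma> a = \<gamma> b) \<and>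
     (\<forall>p\<in>topspace X. \<forall>q\<in>topspace X.
        compactin X {r \<in> topspace X. causal_le X D p r \<and> causal_le X D r q})"

definition causally_convex ::
  "'m topology \<Rightarrow> ('m \<Rightarrow> 'a::euclidean_space \<times> real) \<Rightarrow> 'm set \<Rightarrow> bool" where
  "causally_convex X D U \<longleftrightarrow>
     (\<forall>\<gamma> a b. a < b \<and> causal_curve X D \<gamma> {a..b} \<and> \<gamma> a \<in> U \<and> \<gamma> b \<in> U \<longrightarrow> \<gamma> ` {a..b} \<subseteq> U)"

definition ein_achronal :: "('a::euclidean_space \<times> real) set \<Rightarrow> bool" where
  "ein_achronal A \<longleftrightarrow> A \<subseteq> ein_set \<and>
     (\<forall>p\<in>A. \<forall>q\<in>A. \<not> chrono_less (ein_top :: ('a \<times> real) topology) id p q)"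

end

theory Submission
  imports Defs "HOL-Analysis.Analysis"
begin

lemma lh_refine:
  assumes "local_homeo X Y f" "openin X W" "p \<in> W"
  shows "\<exists>V g. openin X V \<and> p \<in> V \<and> V \<subseteq> W \<and> openin Y (f ` V) \<and>
           homeomorphic_maps (subtopology X V) (subtopology Y (f ` V)) f g"
proof -
  have "p \<in> topspace X" using assms openin_subset by blast
  then obtain V0 where V0: "openin X V0" "p \<in> V0" "openin Y (f ` V0)"
    "homeomorphic_map (subtopology X V0) (subtopology Y (f ` V0)) f"
    using assms(1) unfolding local_homeo_def by blast
  define V where "V = V0 \<inter> W"
  have VX: "openin X V" using V0(1) assms(2) V_def by auto
  have sub: "V \<subseteq> topspace X" using VX openin_subset by blast
  have fV0: "f ` V0 \<subseteq> topspace Y" using V0(3) openin_subset by blast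
  have "f ` (topspace (subtopology X V0) \<inter> V) = topspace (subtopology Y (f ` V0)) \<inter> f ` V"
    using sub fV0 V_def by auto
  from homeomorphic_map_subtopologies[OF V0(4) this]
  have hm: "homeomorphic_map (subtopology X V) (subtopology Y (f ` V)) f"
    by (simp add: subtopology_subtopology V_def Int_absorb1 image_mono Int_assoc)
  have "openin (subtopology X V0) V"
    using VX V_def by (simp add: openin_subtopology_Int2 openin_subset_topspace_eq  openin_open_subtopology V0(1))
  then have "openin (subtopology Y (f ` V0)) (f ` V)"
    using homeomorphic_imp_open_map[OF V0(4)] unfolding open_map_def by blast
  then have "openin Y (f ` V)" using openin_trans_full V0(3) by blast
  then show ?thesis using VX hm homeomorphic_map_maps V_def assms(3) V0(2) by blast
qed

lemma lift_unique:
  fixes J :: "real set"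
  assumes "local_homeo X Y D" "Hausdorff_space X" "is_interval J"
    "continuous_map (top_of_set J) X f1" "continuous_map (top_of_set J) X f2"
    "\<forall>s\<in>J. D (f1 s) = D (f2 s)" "s0 \<in> J" "f1 s0 = f2 s0"
  shows "\<forall>s\<in>J. f1 s = f2 s"
proof -
  let ?T = "top_of_set J"
  have conn: "connected_space ?T" using assms(3) connected_space_iff_is_interval_1 by blast
  define A where "A = {s\<in>J. f1 s = f2 s}"
  have f1X: "f1 s \<in> topspace X" if "s \<in> J" for s
    using assms(4) that unfolding continuous_map_def by auto
  have f2X: "f2 s \<in> topspace X" if "s \<in> J" for s
    using assms(5) that unfolding continuous_map_def by auto
  have op: "openin ?T A"
  proof (subst openin_subopen, intro ballI)
    fix s assume "s \<in> A"
    then have sJ: "s \<in> J" and eq: "f1 s = f2 s" by (auto simp: A_def)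
    obtain V g where V: "openin X V" "f1 s \<in> V"
      "homeomorphic_maps (subtopology X V) (subtopology Y (D ` V)) D g"
      using lh_refine[OF assms(1) openin_topspace f1X[OF sJ]] by blast
    have inv: "\<forall>y\<in>V. g (D y) = y" using V(3) openin_subset[OF V(1)]
      unfolding homeomorphic_maps_def by auto
    define Z where "Z = {x \<in> topspace ?T. f1 x \<in> V} \<inter> {x \<in> topspace ?T. f2 x \<in> V}"
    have "openin ?T Z" unfolding Z_def
      using openin_continuous_map_preimage[OF assms(4) V(1)]
        openin_continuous_map_preimage[OF assms(5) V(1)] by blast
    moreover have "s \<in> Z" using sJ eq V(2) by (auto simp: Z_def)
    moreover have "Z \<subseteq> A"
    proof
      fix x assume "x \<in> Z"
      then have "x \<in> J" "f1 x \<in> V" "f2 x \<in> V" by (auto simp: Z_def)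
      then have "f1 x = g (D (f1 x))" "f2 x = g (D (f2 x))" "D (f1 x) = D (f2 x)"
        using inv assms(6) by metis+
      then show "x \<in> A" using \<open>x \<in> J\<close> by (auto simp: A_def)
    qed
    ultimately show "\<exists>T. openin ?T T \<and> s \<in> T \<and> T \<subseteq> A" by blast
  qed
  have cl: "closedin ?T A"
    unfolding closedin_def
  proof
    show "A \<subseteq> topspace ?T" by (auto simp: A_def)
    show "openin ?T (topspace ?T - A)"
    proof (subst openin_subopen, intro ballI)
      fix s assume "s \<in> topspace ?T - A"
      then have sJ: "s \<in> J" and ne: "f1 s \<noteq> f2 s" by (auto simp: A_def)
      obtain U1 U2 where U: "openin X U1" "openin X U2" "f1 s \<in> U1" "f2 s \<in> U2" "disjnt U1 U2"
        using assms(2) f1X[OF sJ] f2X[OF sJ] ne unfolding Hausdorff_space_def by blast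
      define Z where "Z = {x \<in> topspace ?T. f1 x \<in> U1} \<inter> {x \<in> topspace ?T. f2 x \<in> U2}"
      have "openin ?T Z" unfolding Z_def
        using openin_continuous_map_preimage[OF assms(4) U(1)]
          openin_continuous_map_preimage[OF assms(5) U(2)] by blast
      moreover have "s \<in> Z" using sJ U by (auto simp: Z_def)
      moreover have "Z \<subseteq> topspace ?T - A"
        using U(5) by (auto simp: Z_def A_def disjnt_def)
      ultimately show "\<exists>T. openin ?T T \<and> s \<in> T \<and> T \<subseteq> topspace ?T - A" by blast
    qed
  qed
  have "A = {} \<or> A = topspace ?T" using conn op cl connected_space_clopen_in by blast
  moreover have "s0 \<in> A" using assms(7,8) by (auto simp: A_def)
  ultimately show ?thesis by (auto simp: A_def)
qed

lemma topspace_ein: "topspace (ein_top :: ('a::euclidean_space \<times> real) topology) = ein_set"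
  by (simp add: ein_top_def)

lemma cont_vert:
  fixes x :: "'a::euclidean_space"
  assumes "norm x = 1" "\<forall>s\<in>I. (x, s) \<in> W"
  shows "continuous_map (top_of_set I) (subtopology ein_top W) (\<lambda>s. (x, s))"
proof -
  have "continuous_on I (\<lambda>s. (x, s))" by (intro continuous_intros)
  then have "continuous_map (top_of_set I) euclidean (\<lambda>s. (x, s))"
    using continuous_map_iff_continuous by blast
  then show ?thesis using assms
    by (auto simp: ein_top_def ein_set_def continuous_map_in_subtopology subtopology_subtopology)
qed

lemma local_lift:
  fixes D :: "'m \<Rightarrow> 'a::euclidean_space \<times> real"
  assumes "local_homeo X ein_top D" "openin X U" "m \<in> U" "D m = (x, c)"
  shows "\<exists>V e \<eta>. openin X V \<and> m \<in> V \<and> V \<subseteq> U \<and> inj_on D V \<and> e > 0 \<and>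
     continuous_map (top_of_set {c-e<..<c+e}) X \<eta> \<and> \<eta> c = m \<and>
     (\<forall>s\<in>{c-e<..<c+e}. \<eta> s \<in> V \<and> D (\<eta> s) = (x, s))"
proof -
  obtain V g where V: "openin X V" "m \<in> V" "V \<subseteq> U" "openin ein_top (D ` V)"
     "homeomorphic_maps (subtopology X V) (subtopology ein_top (D ` V)) D g"
    using lh_refine[OF assms(1,2,3)] by blast
  have VX: "V \<subseteq> topspace X" using V(1) openin_subset by blast
  have DV: "D ` V \<subseteq> ein_set" using V(4) openin_subset topspace_ein by metis
  obtain T where T: "open T" "D ` V = T \<inter> ein_set"
    using V(4) unfolding ein_top_def openin_subtopology by auto
  have "(x, c) \<in> D ` V" using V(2) assms(4) by (metis image_eqI)
  then have xc: "(x, c) \<in> T" "(x,c) \<in> ein_set" using T by auto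
  then have nx: "norm x = 1" by (simp add: ein_set_def)
  obtain r where r: "r > 0" "ball (x, c) r \<subseteq> T" using T(1) xc(1) open_contains_ball by blast
  have inDV: "(x, s) \<in> D ` V" if "s \<in> {c-r<..<c+r}" for s
  proof -
    have "dist (x, s) (x, c) = dist s c" by (simp add: dist_Pair_Pair)
    also have "\<dots> < r" using that by (auto simp: dist_real_def)
    finally have "(x, s) \<in> T" using r(2) by (auto simp: dist_commute)
    moreover have "(x, s) \<in> ein_set" using nx by (simp add: ein_set_def)
    ultimately show ?thesis using T(2) by auto
  qed
  have hm: "continuous_map (subtopology ein_top (D ` V)) (subtopology X V) g"
    "\<forall>y\<in>V. g (D y) = y" "\<forall>z\<in>D ` V. D (g z) = z"
    using V(5) VX DV unfolding homeomorphic_maps_def by (auto simp: topspace_ein)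
  have gV: "g z \<in> V" if "z \<in> D ` V" for z
    using hm(1) that DV unfolding continuous_map_def by (auto simp: topspace_ein)
  define \<eta> where "\<eta> = (\<lambda>s. g (x, s))"
  have c1: "continuous_map (top_of_set {c-r<..<c+r}) (subtopology ein_top (D ` V)) (\<lambda>s. (x, s))"
    using cont_vert[OF nx] inDV by blast
  have "continuous_map (top_of_set {c-r<..<c+r}) (subtopology X V) \<eta>"
    unfolding \<eta>_def using continuous_map_compose[OF c1 hm(1)] by (simp add: o_def)
  then have "continuous_map (top_of_set {c-r<..<c+r}) X \<eta>"
    using continuous_map_in_subtopology by blast
  moreover have "inj_on D V" using hm(2) by (metis inj_onI)
  moreover have "\<eta> c = m" using hm(2) V(2) assms(4) unfolding \<eta>_def by metis
  moreover have "\<forall>s\<in>{c-r<..<c+r}. \<eta> s \<in> V \<and> D (\<eta> s) = (x, s)"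
    using inDV gV hm(3) unfolding \<eta>_def by (metis (no_types, lifting))
  ultimately show ?thesis using V(1,2,3) r(1) by blast
qed


lemma D_limit:
  fixes D :: "'m \<Rightarrow> 'a::euclidean_space \<times> real"
  assumes "local_homeo X ein_top D" "limitin X g m F"
  shows "((\<lambda>s. D (g s)) \<longlongrightarrow> D m) F"
proof -
  have mX: "m \<in> topspace X" using assms(2) limitin_topspace by metis
  obtain V h where V: "openin X V" "m \<in> V" "openin ein_top (D ` V)"
     "homeomorphic_maps (subtopology X V) (subtopology ein_top (D ` V)) D h"
    using lh_refine[OF assms(1) openin_topspace mX] by blast
  have "eventually (\<lambda>s. g s \<in> V) F" using assms(2) V(1,2) unfolding limitin_def by blast
  then have l1: "limitin (subtopology X V) g m F" using assms(2) V(2) limitin_subtopology by metis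
  have "continuous_map (subtopology X V) ein_top D"
    using V(4) unfolding homeomorphic_maps_def continuous_map_in_subtopology by blast
  from continuous_map_limit[OF this l1] have "limitin ein_top (D \<circ> g) (D m) F" .
  then have "limitin euclidean (D \<circ> g) (D m) F" unfolding ein_top_def limitin_subtopology by blast
  then show ?thesis by (simp add: limitin_canonical_iff o_def)
qed

lemma cont_glue:
  fixes J :: "real set"
  assumes "open J" "\<forall>s\<in>J. \<exists>Q. open Q \<and> s \<in> Q \<and> Q \<subseteq> J \<and> continuous_map (top_of_set Q) X f"
  shows "continuous_map (top_of_set J) X f"
  unfolding continuous_map_def
proof (intro conjI allI impI)
  show "f \<in> topspace (top_of_set J) \<rightarrow> topspace X"
  proof
    fix s assume "s \<in> topspace (top_of_set J)"
    then obtain Q where "s \<in> Q" "continuous_map (top_of_set Q) X f" using assms(2) by auto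
    then show "f s \<in> topspace X" unfolding continuous_map_def by auto
  qed
  fix W assume W: "openin X W"
  have "open {x \<in> J. f x \<in> W}"
  proof (subst open_subopen, intro ballI)
    fix s assume "s \<in> {x \<in> J. f x \<in> W}"
    then obtain Q where Q: "open Q" "s \<in> Q" "Q \<subseteq> J" "continuous_map (top_of_set Q) X f" "f s \<in> W"
      using assms(2) by auto
    have "openin (top_of_set Q) {x \<in> topspace (top_of_set Q). f x \<in> W}"
      using openin_continuous_map_preimage[OF Q(4) W] .
    then have "open {x \<in> Q. f x \<in> W}" using openin_open_eq[OF Q(1)] by auto
    then show "\<exists>T. open T \<and> s \<in> T \<and> T \<subseteq> {x \<in> J. f x \<in> W}" using Q by blast
  qed
  then show "openin (top_of_set J) {x \<in> topspace (top_of_set J). f x \<in> W}"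
    using openin_open_eq[OF assms(1)] by auto
qed


definition vlift :: "'m topology \<Rightarrow> ('m \<Rightarrow> 'a::euclidean_space \<times> real) \<Rightarrow> 'm set \<Rightarrow> 'm \<Rightarrow> 'a \<Rightarrow> real
   \<Rightarrow> real set \<Rightarrow> (real \<Rightarrow> 'm) \<Rightarrow> bool" where
  "vlift X D U p x t J f \<longleftrightarrow> open J \<and> is_interval J \<and> t \<in> J \<and>
     continuous_map (top_of_set J) X f \<and> f t = p \<and> (\<forall>s\<in>J. f s \<in> U \<and> D (f s) = (x, s))"

lemma interval_Un:
  fixes A B :: "real set"
  assumes "is_interval A" "is_interval B" "c \<in> A" "c \<in> B"
  shows "is_interval (A \<union> B)"
  unfolding is_interval_1
proof (intro ballI allI impI)
  fix a b y assume ab: "a \<in> A \<union> B" "b \<in> A \<union> B" "a \<le> y \<and> y \<le> b"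
  show "y \<in> A \<union> B"
  proof (cases "y \<le> c")
    case True
    then show ?thesis using ab assms mem_is_interval_1_I[of A a c y] mem_is_interval_1_I[of B a c y]
      by blast
  next
    case False
    then show ?thesis using ab assms mem_is_interval_1_I[of A c b y] mem_is_interval_1_I[of B c b y]
      by auto
  qed
qed

lemma lifts_agree:
  assumes "local_homeo X ein_top D" "Hausdorff_space X"
    "vlift X D U p x t J1 f1" "vlift X D U p x t J2 f2" "s \<in> J1 \<inter> J2"
  shows "f1 s = f2 s"
proof -
  have "is_interval (J1 \<inter> J2)" using assms(3,4) is_interval_Int by (auto simp: vlift_def)
  moreover have c: "continuous_map (top_of_set J1) X f1" "continuous_map (top_of_set J2) X f2"
    using assms(3,4) by (auto simp: vlift_def)
  moreover from c have "continuous_map (top_of_set (J1 \<inter> J2)) X f1" "continuous_map (top_of_set (J1 \<inter> J2)) X f2"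
    using continuous_map_from_subtopology_mono by (metis Int_lower1, metis Int_lower2)
  moreover have "\<forall>s\<in>J1 \<inter> J2. D (f1 s) = D (f2 s)" using assms(3,4) by (auto simp: vlift_def)
  moreover have "t \<in> J1 \<inter> J2" "f1 t = f2 t" using assms(3,4) by (auto simp: vlift_def)
  ultimately show ?thesis using lift_unique[OF assms(1,2)] assms(5) by blast
qed


lemma finite_end:
  fixes D :: "'m \<Rightarrow> 'a::euclidean_space \<times> real"
  assumes lh: "local_homeo X ein_top D" and H: "Hausdorff_space X" and U: "openin X U"
    and lf: "vlift X D U p x t L \<Gamma>" and mx: "\<forall>J f. vlift X D U p x t J f \<longrightarrow> J \<subseteq> L"
    and bL: "b \<notin> L" and Fnb: "at b within A \<noteq> bot"
    and evL: "eventually (\<lambda>s. s \<in> L) (at b within A)"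
    and lim: "limitin (subtopology X U) \<Gamma> m (at b within A)"
  shows False
proof -
  let ?F = "at b within A"
  have mU: "m \<in> U" and limX: "limitin X \<Gamma> m ?F" using lim limitin_subtopology by metis+
  have t1: "((\<lambda>s. D (\<Gamma> s)) \<longlongrightarrow> D m) ?F" using D_limit[OF lh limX] .
  have "((\<lambda>s. (x, s)) \<longlongrightarrow> (x, b)) ?F" by (intro tendsto_intros tendsto_ident_at)
  moreover have "eventually (\<lambda>s. (x, s) = D (\<Gamma> s)) ?F"
    using evL by eventually_elim (use lf in \<open>auto simp: vlift_def\<close>)
  ultimately have "((\<lambda>s. D (\<Gamma> s)) \<longlongrightarrow> (x, b)) ?F" by (rule Lim_transform_eventually)
  from tendsto_unique[OF Fnb t1 this] have Dm: "D m = (x, b)" .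
  obtain V e \<eta> where V: "openin X V" "m \<in> V" "V \<subseteq> U" "inj_on D V" "e > 0"
     "continuous_map (top_of_set {b-e<..<b+e}) X \<eta>" "\<eta> b = m"
     "\<forall>s\<in>{b-e<..<b+e}. \<eta> s \<in> V \<and> D (\<eta> s) = (x, s)"
    using local_lift[OF lh U mU Dm] by blast
  let ?I = "{b-e<..<b+e}"
  have ev1: "eventually (\<lambda>s. \<Gamma> s \<in> V) ?F" using limX V(1,2) unfolding limitin_def by blast
  have ev2: "eventually (\<lambda>s. dist s b < e) ?F" using tendstoD[OF tendsto_ident_at V(5)] by blast
  have "eventually (\<lambda>s. \<Gamma> s \<in> V \<and> dist s b < e \<and> s \<in> L) ?F"
    using ev1 ev2 evL by eventually_elim auto
  then obtain s1 where s1: "\<Gamma> s1 \<in> V" "dist s1 b < e" "s1 \<in> L" using eventually_happens'[OF Fnb] by blast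
  have s1I: "s1 \<in> ?I" using s1(2) by (auto simp: dist_real_def)
  have "D (\<Gamma> s1) = D (\<eta> s1)" using lf s1(3) V(8) s1I by (auto simp: vlift_def)
  moreover have "\<eta> s1 \<in> V" using V(8) s1I by blast
  ultimately have eq1: "\<Gamma> s1 = \<eta> s1" using inj_onD[OF V(4)] s1(1) by blast
  have Iint: "is_interval ?I" by (simp add: is_interval_oo)
  have agree: "\<forall>s\<in>L \<inter> ?I. \<Gamma> s = \<eta> s"
  proof (rule lift_unique[OF lh H])
    show "is_interval (L \<inter> ?I)" using lf by (intro is_interval_Int) (auto simp: vlift_def)
    show "continuous_map (top_of_set (L \<inter> ?I)) X \<Gamma>"
      using lf continuous_map_from_subtopology_mono[of euclidean L X \<Gamma>] by (auto simp: vlift_def)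
    show "continuous_map (top_of_set (L \<inter> ?I)) X \<eta>"
      using V(6) continuous_map_from_subtopology_mono[of euclidean ?I X \<eta>] by auto
    show "\<forall>s\<in>L \<inter> ?I. D (\<Gamma> s) = D (\<eta> s)" using lf V(8) by (auto simp: vlift_def)
    show "s1 \<in> L \<inter> ?I" using s1 s1I by auto
    show "\<Gamma> s1 = \<eta> s1" by (rule eq1)
  qed
  define f where "f = (\<lambda>s. if s \<in> L then \<Gamma> s else \<eta> s)"
  have "vlift X D U p x t (L \<union> ?I) f"
    unfolding vlift_def
  proof (intro conjI)
    show "open (L \<union> ?I)" using lf by (auto simp: vlift_def)
    show "is_interval (L \<union> ?I)" using interval_Un[of L ?I s1] lf Iint s1 s1I by (auto simp: vlift_def)
    show "t \<in> L \<union> ?I" using lf by (auto simp: vlift_def)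
    show "f t = p" using lf by (auto simp: vlift_def f_def)
    show "\<forall>s\<in>L \<union> ?I. f s \<in> U \<and> D (f s) = (x, s)"
      using lf V(3,8) by (auto simp: vlift_def f_def)
    show "continuous_map (top_of_set (L \<union> ?I)) X f"
    proof (rule cont_glue)
      show "open (L \<union> ?I)" using lf by (auto simp: vlift_def)
      show "\<forall>s\<in>L \<union> ?I. \<exists>Q. open Q \<and> s \<in> Q \<and> Q \<subseteq> L \<union> ?I \<and> continuous_map (top_of_set Q) X f"
      proof
        fix s assume s: "s \<in> L \<union> ?I"
        show "\<exists>Q. open Q \<and> s \<in> Q \<and> Q \<subseteq> L \<union> ?I \<and> continuous_map (top_of_set Q) X f"
        proof (cases "s \<in> L")
          case True
          have "continuous_map (top_of_set L) X \<Gamma>" using lf by (simp add: vlift_def)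
          then have "continuous_map (top_of_set L) X f"
            by (rule continuous_map_eq) (simp add: f_def)
          then show ?thesis using True lf by (auto simp: vlift_def)
        next
          case False
          have "continuous_map (top_of_set ?I) X f"
            by (rule continuous_map_eq[OF V(6)]) (use agree in \<open>auto simp: f_def\<close>)
          then show ?thesis using False s by (intro exI[of _ ?I]) auto
        qed
      qed
    qed
  qed
  then have "L \<union> ?I \<subseteq> L" using mx by blast
  moreover have "b \<in> ?I" using V(5) by auto
  ultimately show False using bL by blast
qed

lemma infinite_end:
  fixes D :: "'m \<Rightarrow> 'a::euclidean_space \<times> real"
  assumes lh: "local_homeo X ein_top D"
    and lf: "vlift X D U p x t L \<Gamma>" and Fnb: "F \<noteq> bot"
    and evL: "eventually (\<lambda>s. s \<in> L) F"
    and far: "\<forall>c::real. eventually (\<lambda>s. 1 \<le> \<bar>s - c\<bar>) F"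
    and lim: "limitin (subtopology X U) \<Gamma> m F"
  shows False
proof -
  have limX: "limitin X \<Gamma> m F" using lim limitin_subtopology by metis
  have "((\<lambda>s. snd (D (\<Gamma> s))) \<longlongrightarrow> snd (D m)) F" using D_limit[OF lh limX] by (intro tendsto_intros)
  moreover have "eventually (\<lambda>s. snd (D (\<Gamma> s)) = s) F"
    using evL by eventually_elim (use lf in \<open>auto simp: vlift_def\<close>)
  ultimately have "((\<lambda>s. s) \<longlongrightarrow> snd (D m)) F" by (rule Lim_transform_eventually)
  then have "eventually (\<lambda>s. dist s (snd (D m)) < 1) F" using tendstoD by fastforce
  then have "eventually (\<lambda>s. False) F" using far[rule_format, of "snd (D m)"]
    by eventually_elim (auto simp: dist_real_def)
  then show False using Fnb by (simp add: eventually_False)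
qed


lemma max_lift:
  fixes D :: "'m \<Rightarrow> 'a::euclidean_space \<times> real"
  assumes lh: "local_homeo X ein_top D" and H: "Hausdorff_space X" and U: "openin X U"
    and pU: "p \<in> U" and Dp: "D p = (x, t)"
  shows "\<exists>L \<Gamma>. vlift X D U p x t L \<Gamma> \<and> inextendible (subtopology X U) \<Gamma> L"
proof -
  define L where "L = \<Union>{J. \<exists>f. vlift X D U p x t J f}"
  define \<Gamma> where "\<Gamma> = (\<lambda>s. SOME y. \<exists>J f. vlift X D U p x t J f \<and> s \<in> J \<and> y = f s)"
  have \<Gamma>eq: "\<Gamma> s = f s" if "vlift X D U p x t J f" "s \<in> J" for J f s
  proof -
    have "\<exists>y. \<exists>J f. vlift X D U p x t J f \<and> s \<in> J \<and> y = f s" using that by blast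
    then have "\<exists>J f. vlift X D U p x t J f \<and> s \<in> J \<and> \<Gamma> s = f s"
      unfolding \<Gamma>_def by (rule someI_ex)
    then obtain J' f' where "vlift X D U p x t J' f'" "s \<in> J'" "\<Gamma> s = f' s" by blast
    then show ?thesis using lifts_agree[OF lh H _ that(1), of J' f' s] that(2) by auto
  qed
  obtain V e \<eta> where V: "openin X V" "p \<in> V" "V \<subseteq> U" "inj_on D V" "e > 0"
     "continuous_map (top_of_set {t-e<..<t+e}) X \<eta>" "\<eta> t = p"
     "\<forall>s\<in>{t-e<..<t+e}. \<eta> s \<in> V \<and> D (\<eta> s) = (x, s)"
    using local_lift[OF lh U pU Dp] by blast
  have v0: "vlift X D U p x t {t-e<..<t+e} \<eta>"
    unfolding vlift_def using V by auto
  have tL: "t \<in> L" using v0 V(5) unfolding L_def by auto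
  have mx: "\<forall>J f. vlift X D U p x t J f \<longrightarrow> J \<subseteq> L" unfolding L_def by blast
  have openL: "open L" unfolding L_def by (auto simp: vlift_def)
  have intL: "is_interval L" unfolding is_interval_1
  proof (intro ballI allI impI)
    fix a b y assume "a \<in> L" "b \<in> L" "a \<le> y \<and> y \<le> b"
    then obtain J1 f1 J2 f2 where J: "vlift X D U p x t J1 f1" "a \<in> J1" "vlift X D U p x t J2 f2" "b \<in> J2"
      unfolding L_def by blast
    have "is_interval (J1 \<union> J2)" using J interval_Un[of J1 J2 t] by (auto simp: vlift_def)
    then have "y \<in> J1 \<union> J2" using J \<open>a \<le> y \<and> y \<le> b\<close> mem_is_interval_1_I[of "J1 \<union> J2" a b y] by blast
    then show "y \<in> L" using J mx by blast
  qed
  have vL: "vlift X D U p x t L \<Gamma>"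
    unfolding vlift_def
  proof (intro conjI)
    show "open L" "is_interval L" "t \<in> L" by fact+
    show "\<Gamma> t = p" using \<Gamma>eq[OF v0] V(5,7) by auto
    show "\<forall>s\<in>L. \<Gamma> s \<in> U \<and> D (\<Gamma> s) = (x, s)"
    proof
      fix s assume "s \<in> L"
      then obtain J f where "vlift X D U p x t J f" "s \<in> J" unfolding L_def by blast
      then show "\<Gamma> s \<in> U \<and> D (\<Gamma> s) = (x, s)" using \<Gamma>eq by (auto simp: vlift_def)
    qed
    show "continuous_map (top_of_set L) X \<Gamma>"
    proof (rule cont_glue[OF openL], intro ballI)
      fix s assume "s \<in> L"
      then obtain J f where J: "vlift X D U p x t J f" "s \<in> J" unfolding L_def by blast
      have "continuous_map (top_of_set J) X \<Gamma>"
        by (rule continuous_map_eq[of _ _ f]) (use J \<Gamma>eq in \<open>auto simp: vlift_def\<close>)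
      moreover have "J \<subseteq> L" using J mx by blast
      ultimately show "\<exists>Q. open Q \<and> s \<in> Q \<and> Q \<subseteq> L \<and> continuous_map (top_of_set Q) X \<Gamma>"
        using J by (auto simp: vlift_def)
    qed
  qed
  have Lne: "L \<noteq> {}" using tL by blast
  have up: "\<not> (\<exists>m. limitin (subtopology X U) \<Gamma> m (upper_end L))"
  proof
    assume "\<exists>m. limitin (subtopology X U) \<Gamma> m (upper_end L)"
    then obtain m where lim: "limitin (subtopology X U) \<Gamma> m (upper_end L)" by blast
    show False
    proof (cases "bdd_above L")
      case True
      define b where "b = Sup L"
      have tb: "t \<le> b" using True tL cSup_upper b_def by blast
      have bL: "b \<notin> L"
      proof
        assume "b \<in> L"
        then obtain d where d: "d > 0" "ball b d \<subseteq> L" using openL open_contains_ball by blast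
        then have "b + d/2 \<in> L" by (auto simp: dist_real_def)
        then have "b + d/2 \<le> b" using True cSup_upper b_def by blast
        then show False using d by simp
      qed
      then have tb': "t < b" using tb tL by (cases "t = b") auto
      have evL: "eventually (\<lambda>s. s \<in> L) (at_left b)"
        using eventually_at_left_real[OF tb']
      proof eventually_elim
        case (elim s)
        then obtain l where "l \<in> L" "s < l" using less_cSupD[OF Lne] b_def by auto
        then show ?case using elim tL by (meson intL mem_is_interval_1_I less_imp_le greaterThanLessThan_iff)
      qed
      have "limitin (subtopology X U) \<Gamma> m (at_left b)" using lim True by (simp add: upper_end_def b_def)
      then show False using finite_end[OF lh H U vL mx bL trivial_limit_at_left_real evL] by blast
    next
      case False
      have evL: "eventually (\<lambda>s. s \<in> L) at_top"
        using eventually_ge_at_top[of t]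
      proof eventually_elim
        case (elim s)
        obtain l where "l \<in> L" "s < l" using False unfolding bdd_above_def by (meson not_le)
        then show ?case using elim tL by (meson intL mem_is_interval_1_I less_imp_le greaterThanLessThan_iff)
      qed
      have far: "\<forall>c::real. eventually (\<lambda>s. 1 \<le> \<bar>s - c\<bar>) at_top"
      proof
        fix c :: real
        show "eventually (\<lambda>s. 1 \<le> \<bar>s - c\<bar>) at_top"
          using eventually_ge_at_top[of "c + 1"] by eventually_elim auto
      qed
      have "limitin (subtopology X U) \<Gamma> m at_top" using lim False by (simp add: upper_end_def)
      then show False using infinite_end[OF lh vL trivial_limit_at_top_linorder evL far] by blast
    qed
  qed
  have down: "\<not> (\<exists>m. limitin (subtopology X U) \<Gamma> m (lower_end L))"
  proof
    assume "\<exists>m. limitin (subtopology X U) \<Gamma> m (lower_end L)"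
    then obtain m where lim: "limitin (subtopology X U) \<Gamma> m (lower_end L)" by blast
    show False
    proof (cases "bdd_below L")
      case True
      define b where "b = Inf L"
      have tb: "b \<le> t" using True tL cInf_lower b_def by blast
      have bL: "b \<notin> L"
      proof
        assume "b \<in> L"
        then obtain d where d: "d > 0" "ball b d \<subseteq> L" using openL open_contains_ball by blast
        then have "b - d/2 \<in> L" by (auto simp: dist_real_def)
        then have "b \<le> b - d/2" using True cInf_lower b_def by blast
        then show False using d by simp
      qed
      then have tb': "b < t" using tb tL by (cases "t = b") auto
      have evL: "eventually (\<lambda>s. s \<in> L) (at_right b)"
        using eventually_at_right_real[OF tb']
      proof eventually_elim
        case (elim s)
        then obtain l where "l \<in> L" "l < s" using cInf_lessD[OF Lne] b_def by auto
        then show ?case using elim tL by (meson intL mem_is_interval_1_I less_imp_le greaterThanLessThan_iff)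
      qed
      have "limitin (subtopology X U) \<Gamma> m (at_right b)" using lim True by (simp add: lower_end_def b_def)
      then show False using finite_end[OF lh H U vL mx bL trivial_limit_at_right_real evL] by blast
    next
      case False
      have evL: "eventually (\<lambda>s. s \<in> L) at_bot"
        using eventually_le_at_bot[of t]
      proof eventually_elim
        case (elim s)
        obtain l where "l \<in> L" "l < s" using False unfolding bdd_below_def by (meson not_le)
        then show ?case using elim tL by (meson intL mem_is_interval_1_I less_imp_le greaterThanLessThan_iff)
      qed
      have far: "\<forall>c::real. eventually (\<lambda>s. 1 \<le> \<bar>s - c\<bar>) at_bot"
      proof
        fix c :: real
        show "eventually (\<lambda>s. 1 \<le> \<bar>s - c\<bar>) at_bot"
          using eventually_le_at_bot[of "c - 1"] by eventually_elim auto
      qed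
      have "limitin (subtopology X U) \<Gamma> m at_bot" using lim False by (simp add: lower_end_def)
      then show False using infinite_end[OF lh vL trivial_limit_at_bot_linorder evL far] by blast
    qed
  qed
  show ?thesis using vL up down unfolding inextendible_def by blast
qed


lemma sdist_self: "norm (x::'a::euclidean_space) = 1 \<Longrightarrow> sdist x x = 0"
  by (simp add: sdist_def power2_norm_eq_inner[symmetric])

lemma vlift_timelike:
  fixes D :: "'m \<Rightarrow> 'a::euclidean_space \<times> real"
  assumes "vlift X D U p x t L \<Gamma>" "norm x = 1"
  shows "timelike_curve (subtopology X U) D \<Gamma> L"
  unfolding timelike_curve_def
proof (rule disjI1, unfold future_timelike_curve_def, intro conjI)
  have L: "open L" "is_interval L" "t \<in> L" "continuous_map (top_of_set L) X \<Gamma>"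
    "\<forall>s\<in>L. \<Gamma> s \<in> U \<and> D (\<Gamma> s) = (x, s)" using assms(1) by (auto simp: vlift_def)
  obtain d where d: "d > 0" "ball t d \<subseteq> L" using L(1,3) open_contains_ball by blast
  have "t + d/2 \<in> L" using d by (auto simp: dist_real_def)
  then show "param_interval L" unfolding param_interval_def using L(2,3) d(1)
    by (intro conjI bexI[of _ t] bexI[of _ "t + d/2"]) auto
  show "continuous_map (top_of_set L) (subtopology X U) \<Gamma>"
    using L(4,5) by (auto simp: continuous_map_in_subtopology)
  show "\<forall>s1\<in>L. \<forall>s2\<in>L. s1 < s2 \<longrightarrow> sdist (fst (D (\<Gamma> s1))) (fst (D (\<Gamma> s2))) < snd (D (\<Gamma> s2)) - snd (D (\<Gamma> s1))"
    using L(5) sdist_self[OF assms(2)] by auto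
qed

lemma vert_chrono:
  fixes x :: "'a::euclidean_space"
  assumes "norm x = 1" "a < b"
  shows "chrono_less (ein_top :: ('a \<times> real) topology) id (x, a) (x, b)"
  unfolding chrono_less_def
proof (intro exI conjI)
  show "a < b" by fact
  have "continuous_map (top_of_set {a..b}) (subtopology ein_top UNIV) (\<lambda>s. (x, s))"
    using cont_vert[OF assms(1)] by blast
  then have c: "continuous_map (top_of_set {a..b}) ein_top (\<lambda>s. (x, s))" by simp
  show "future_timelike_curve ein_top id (\<lambda>s. (x, s)) {a..b}"
  proof -
    have "param_interval {a..b}" unfolding param_interval_def using assms(2)
      by (intro conjI is_interval_cc bexI[of _ a] bexI[of _ b]) auto
    then show ?thesis unfolding future_timelike_curve_def
      using c assms sdist_self[OF assms(1)] by auto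
  qed
  show "(x, a) = (x, a)" "(x, b) = (x, b)" by simp_all
qed

theorem lemma4p1:
  fixes X :: "'m topology" and D :: "'m \<Rightarrow> 'a::euclidean_space \<times> real"
    and U S :: "'m set"
  assumes "DIM('a) \<ge> 3"
    and "developed_spacetime X D"
    and "globally_hyperbolic X D"
    and "openin X U"
    and "causally_convex X D U"
    and "cauchy_hypersurface (subtopology X U) D S"
    and "ein_achronal (D ` S)"
    and "inj_on D S"
  shows "inj_on D U"
proof (rule inj_onI)
  have lh: "local_homeo X ein_top D" and H: "Hausdorff_space X"
    using assms(2) by (auto simp: developed_spacetime_def)
  have cau: "\<And>\<gamma> I. timelike_curve (subtopology X U) D \<gamma> I \<Longrightarrow> inextendible (subtopology X U) \<gamma> I
      \<Longrightarrow> \<exists>!s. s \<in> I \<and> \<gamma> s \<in> S"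
    using assms(6) unfolding cauchy_hypersurface_def by blast
  have ach: "\<And>u v. u \<in> D ` S \<Longrightarrow> v \<in> D ` S \<Longrightarrow> \<not> chrono_less (ein_top :: ('a \<times> real) topology) id u v"
    using assms(7) unfolding ein_achronal_def by blast
  fix p q assume pU: "p \<in> U" and qU: "q \<in> U" and eq: "D p = D q"
  obtain x t where Dp: "D p = (x, t)" by (cases "D p")
  have Dq: "D q = (x, t)" using Dp eq by simp
  have "p \<in> topspace X" using pU assms(4) openin_subset by blast
  then obtain V where "openin X V" "p \<in> V" "openin ein_top (D ` V)"
    using lh unfolding local_homeo_def by blast
  then have "D p \<in> topspace (ein_top :: ('a \<times> real) topology)" using openin_subset by blast
  then have nx: "norm x = 1" using Dp by (simp add: topspace_ein ein_set_def)
  obtain Lp \<Gamma>p where Gp: "vlift X D U p x t Lp \<Gamma>p" "inextendible (subtopology X U) \<Gamma>p Lp"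
    using max_lift[OF lh H assms(4) pU Dp] by blast
  obtain Lq \<Gamma>q where Gq: "vlift X D U q x t Lq \<Gamma>q" "inextendible (subtopology X U) \<Gamma>q Lq"
    using max_lift[OF lh H assms(4) qU Dq] by blast
  obtain sp where sp: "sp \<in> Lp" "\<Gamma>p sp \<in> S" using cau[OF vlift_timelike[OF Gp(1) nx] Gp(2)] by blast
  obtain sq where sq: "sq \<in> Lq" "\<Gamma>q sq \<in> S" using cau[OF vlift_timelike[OF Gq(1) nx] Gq(2)] by blast
  have Dsp: "D (\<Gamma>p sp) = (x, sp)" using Gp(1) sp(1) by (auto simp: vlift_def)
  have Dsq: "D (\<Gamma>q sq) = (x, sq)" using Gq(1) sq(1) by (auto simp: vlift_def)
  have i1: "(x, sp) \<in> D ` S" using Dsp sp(2) by (metis image_eqI)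
  have i2: "(x, sq) \<in> D ` S" using Dsq sq(2) by (metis image_eqI)
  have "\<not> sp < sq" using ach[OF i1 i2] vert_chrono[OF nx] by blast
  moreover have "\<not> sq < sp" using ach[OF i2 i1] vert_chrono[OF nx] by blast
  ultimately have spq: "sp = sq" by simp
  have "\<Gamma>p sp = \<Gamma>q sp" using assms(8) sp(2) sq(2) Dsp Dsq spq inj_onD by metis
  have cp: "continuous_map (top_of_set Lp) X \<Gamma>p" and cq: "continuous_map (top_of_set Lq) X \<Gamma>q"
    using Gp(1) Gq(1) by (auto simp: vlift_def)
  have "\<forall>s\<in>Lp \<inter> Lq. \<Gamma>p s = \<Gamma>q s"
  proof (rule lift_unique[OF lh H])
    show "is_interval (Lp \<inter> Lq)" using Gp(1) Gq(1) by (intro is_interval_Int) (auto simp: vlift_def)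
    show "continuous_map (top_of_set (Lp \<inter> Lq)) X \<Gamma>p"
      using continuous_map_from_subtopology_mono[OF cp] by blast
    show "continuous_map (top_of_set (Lp \<inter> Lq)) X \<Gamma>q"
      using continuous_map_from_subtopology_mono[OF cq] by blast
    show "\<forall>s\<in>Lp \<inter> Lq. D (\<Gamma>p s) = D (\<Gamma>q s)" using Gp(1) Gq(1) by (auto simp: vlift_def)
    show "sp \<in> Lp \<inter> Lq" using sp sq spq by simp
    show "\<Gamma>p sp = \<Gamma>q sp" by fact
  qed
  moreover have "t \<in> Lp \<inter> Lq" "\<Gamma>p t = p" "\<Gamma>q t = q" using Gp(1) Gq(1) by (auto simp: vlift_def)
  ultimately show "p = q" by metis
qed

end
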